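(* In the setting below, assume $\|\nabla f_i(x)\|\le G_i$ for all $x$ and $i$, and $\psi$ satisfies the $\mu_\psi$-condition. Let $\gamma_k=\eta_k\prod_{\ell=2}^k(1+n\eta_{\ell-1}\mu_\psi)$ for $k\in[K]$. Then for any permutations $\sigma_1,\dots,\sigma_K$, $$F(x_{K+1})-F(x_* )\le\frac{\|x_*-x_1\|^2-\|x_*-x_{K+1}\|^2}{2n\sum_{k=1}^K\gamma_k}+3\bar G^2n\sum_{k=1}^K\frac{\gamma_k\eta_k}{\sum_{\ell=k}^K\gamma_\ell}.$$
   Context: Setting. Let $n,d\in\mathbb N$, let $f_1,\dots,f_n:\mathbb R^d\to\mathbb R$ be convex, $f=\frac1n\sum_{i=1}^nf_i$, let $\psi:\mathbb R^d\to\mathbb R\cup\{+\infty\}$ be proper, closed and convex, and $F=f+\psi$. For a convex function $g$, $\nabla g(x)$ denotes an element of $\partial g(x)$ (for each $f_i$ a fixed selection of subgradients, the same one used in the algorithm), and $B_g(x,y)=g(x)-g(y)-\langle\nabla g(y),x-y\rangle$. The $\mu_\psi$-condition: $\mu_\psi\ge0$ and $B_\psi(x,y)\ge\frac{\mu_\psi}{2}\|x-y\|^2$ for all $x,y$ with $\partial\psi(y)\neq\emptyset$ and every choice of $\nabla\psi(y)\in\partial\psi(y)$. Assume there is $x_*\in\mathbb R^d$ with $F(x_* )=\inf_{x}F(x)\in\mathbb R$. Proximal shuffling gradient method: given $x_1\in\mathrm{dom}\,\psi$, a number of epochs $K\ge2$ and stepsizes $\eta_k>0$, for $k=1,\dots,K$: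 choose a permutation $\sigma_k=(\sigma_k^1,\dots,\sigma_k^n)$ of $[n]=\{1,\dots,n\}$; set $x_k^1=x_k$ and $x_k^{i+1}=x_k^i-\eta_k\nabla f_{\sigma_k^i}(x_k^i)$ for $i=1,\dots,n$; set $x_{k+1}=\arg\min_{x\in\mathbb R^d}\{n\psi(x)+\frac{1}{2\eta_k}\|x-x_k^{n+1}\|^2\}$. Lipschitz condition: constants $G_i>0$ with $\|\nabla f_i(x)\|\le G_i$ for all $x\in\mathbb R^d$, $i\in[n]$ (for every subgradient); $\bar G=\frac1n\sum_{i=1}^nG_i$. *)

theory Defs
  imports "HOL-Analysis.Analysis"
begin

text \<open>Extended-valued convex functions are represented by a real-valued function
  together with its effective domain D (the function is +infinity outside D).\<close>

definition is_subgrad :: "'a set \<Rightarrow> ('a::real_inner \<Rightarrow> real) \<Rightarrow> 'a \<Rightarrow> 'a \<Rightarrow> bool" where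
  "is_subgrad D h y v \<longleftrightarrow> y \<in> D \<and> (\<forall>x\<in>D. h x \<ge> h y + inner v (x - y))"

definition proper_closed_convex :: "'a set \<Rightarrow> ('a::real_normed_vector \<Rightarrow> real) \<Rightarrow> bool" where
  "proper_closed_convex D h \<longleftrightarrow> D \<noteq> {} \<and> convex D \<and> convex_on D h \<and>
     closed {(x, t) | x t. x \<in> D \<and> h x \<le> t}"

definition bregman :: "('a::real_inner \<Rightarrow> real) \<Rightarrow> 'a \<Rightarrow> 'a \<Rightarrow> 'a \<Rightarrow> real" where
  "bregman h v x y = h x - h y - inner v (x - y)"

text \<open>mu-condition for psi (only x in dom psi matter: otherwise B = +infinity)\<close>
definition mu_condition :: "'a set \<Rightarrow> ('a::real_inner \<Rightarrow> real) \<Rightarrow> real \<Rightarrow> bool" where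
  "mu_condition D h \<mu> \<longleftrightarrow> \<mu> \<ge> 0 \<and>
     (\<forall>x\<in>D. \<forall>y v. is_subgrad D h y v \<longrightarrow> bregman h v x y \<ge> \<mu> / 2 * (norm (x - y))\<^sup>2)"

end

theory Submission
  imports Defs
begin


lemma combine:
  fixes \<gamma> \<Delta> C :: "nat \<Rightarrow> real" and d :: "nat \<Rightarrow> nat \<Rightarrow> real" and c :: real and K :: nat
  assumes K1: "K \<ge> 1"
    and gpos: "\<And>k. k \<in> {1..K} \<Longrightarrow> \<gamma> k > 0"
    and E: "\<And>k j. k \<in> {1..K} \<Longrightarrow> j \<le> k \<Longrightarrow> c * \<gamma> k * (\<Delta> (Suc k) - \<Delta> j) \<le> d j k - d j (Suc k) + C k"
    and dd: "\<And>j. j \<in> {1..K} \<Longrightarrow> d j j = 0"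
    and dnn: "\<And>j. j \<le> K \<Longrightarrow> d j (Suc K) \<ge> 0"
    and D0: "\<Delta> 0 = 0"
  shows "c * \<Delta> (Suc K) \<le> (d 0 1 - d 0 (Suc K)) / (\<Sum>k=1..K. \<gamma> k) + (\<Sum>k=1..K. C k / (\<Sum>l=k..K. \<gamma> l))"
proof -
  define S where "S k = (\<Sum>l=k..K. \<gamma> l)" for k
  define v where "v j = 1 / S (max 1 j)" for j
  define b where "b j = (if j = 0 then v 0 else v j - v (j - 1))" for j
  have Srec: "S k = \<gamma> k + S (Suc k)" if "k \<le> K" for k
    unfolding S_def using that by (simp add: sum.atLeast_Suc_atMost)
  have SK: "S (Suc K) = 0" unfolding S_def by simp
  have Spos: "S k > 0" if "k \<in> {1..K}" for k
    unfolding S_def using that gpos by (intro sum_pos) auto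
  have Snn: "S k \<ge> 0" if "k \<ge> 1" for k
    unfolding S_def using gpos that by (intro sum_nonneg) (auto intro: less_imp_le)
  have vS: "v k * S k = 1" if "k \<in> {1..K}" for k
    using Spos[OF that] that by (simp add: v_def max_def)
  have v1: "v k = 1 / S k" if "k \<ge> 1" for k using that by (simp add: v_def max_def)
  have v0: "v 0 = 1 / S 1" by (simp add: v_def)
  have sumb: "(\<Sum>j\<le>m. b j) = v m" for m
    by (induction m) (auto simp: b_def)
  have bnn: "b j \<ge> 0" if "j \<le> K" for j
  proof (cases "j \<le> 1")
    case True
    then have "j = 0 \<or> j = 1" by auto
    then show ?thesis using Spos[of 1] K1 by (auto simp: b_def v_def)
  next
    case False
    have "1 \<le> j - 1" "j - 1 \<le> K" "Suc (j-1) = j" using False that by auto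
    then have "S j \<le> S (j - 1)" using Srec[of "j-1"] gpos[of "j-1"] by force
    moreover have "S j > 0" using Spos[of j] False that by auto
    ultimately show ?thesis using False by (simp add: b_def v_def max_def frac_le)
  qed
  have J: "c * (\<gamma> m * v m * \<Delta> (Suc m) + S (Suc m) * (\<Sum>j\<le>m. b j * \<Delta> j))
     \<le> v 0 * d 0 1 - (\<Sum>j\<le>m. b j * d j (Suc m)) + (\<Sum>k=1..m. v k * C k)"
    if "1 \<le> m" "m \<le> K" for m
    using that
  proof (induction m)
    case 0 then show ?case by simp
  next
    case (Suc m)
    show ?case
    proof (cases "m = 0")
      case True
      have b1: "b 1 = 0" by (simp add: b_def v_def)
      have "c * \<gamma> 1 * (\<Delta> 2 - \<Delta> 0) \<le> d 0 1 - d 0 2 + C 1"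
        using E[of 1 0] K1 by (simp add: numeral_2_eq_2)
      then have "v 1 * (c * \<gamma> 1 * (\<Delta> 2 - \<Delta> 0)) \<le> v 1 * (d 0 1 - d 0 2 + C 1)"
        using bnn[of 0] by (intro mult_left_mono) (auto simp: b_def v_def)
      then show ?thesis using True b1 D0 by (simp add: b_def v_def algebra_simps numeral_2_eq_2)
    next
      case False
      then have m1: "1 \<le> m" and mK: "Suc m \<le> K" using Suc by auto
      have IH: "c * (\<gamma> m * v m * \<Delta> (Suc m) + S (Suc m) * (\<Sum>j\<le>m. b j * \<Delta> j))
     \<le> v 0 * d 0 1 - (\<Sum>j\<le>m. b j * d j (Suc m)) + (\<Sum>k=1..m. v k * C k)"
        using Suc.IH m1 mK by simp
      have W: "(\<Sum>j\<le>Suc m. b j * (c * \<gamma> (Suc m) * (\<Delta> (Suc (Suc m)) - \<Delta> j)))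
         \<le> (\<Sum>j\<le>Suc m. b j * (d j (Suc m) - d j (Suc (Suc m)) + C (Suc m)))"
        using mK by (intro sum_mono mult_left_mono E bnn) auto
      have L: "(\<Sum>j\<le>Suc m. b j * (c * \<gamma> (Suc m) * (\<Delta> (Suc (Suc m)) - \<Delta> j)))
          = c * \<gamma> (Suc m) * (v (Suc m) * \<Delta> (Suc (Suc m)) - (\<Sum>j\<le>Suc m. b j * \<Delta> j))"
      proof -
        have "(\<Sum>j\<le>Suc m. b j * (c * \<gamma> (Suc m) * (\<Delta> (Suc (Suc m)) - \<Delta> j)))
           = (\<Sum>j\<le>Suc m. (c * \<gamma> (Suc m) * \<Delta> (Suc (Suc m))) * b j - (c * \<gamma> (Suc m)) * (b j * \<Delta> j))"
          by (rule sum.cong) (simp_all add: algebra_simps)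
        also have "\<dots> = (c * \<gamma> (Suc m) * \<Delta> (Suc (Suc m))) * (\<Sum>j\<le>Suc m. b j) - (c * \<gamma> (Suc m)) * (\<Sum>j\<le>Suc m. b j * \<Delta> j)"
          by (simp only: sum_subtractf flip: sum_distrib_left)
        finally show ?thesis unfolding sumb by (simp add: algebra_simps del: sum.atMost_Suc)
      qed
      have R: "(\<Sum>j\<le>Suc m. b j * (d j (Suc m) - d j (Suc (Suc m)) + C (Suc m)))
          = (\<Sum>j\<le>m. b j * d j (Suc m)) - (\<Sum>j\<le>Suc m. b j * d j (Suc (Suc m))) + v (Suc m) * C (Suc m)"
      proof -
        have "(\<Sum>j\<le>Suc m. b j * (d j (Suc m) - d j (Suc (Suc m)) + C (Suc m)))
          = (\<Sum>j\<le>Suc m. b j * d j (Suc m)) - (\<Sum>j\<le>Suc m. b j * d j (Suc (Suc m))) + (\<Sum>j\<le>Suc m. b j) * C (Suc m)"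
          by (simp only: sum.distrib sum_subtractf distrib_left right_diff_distrib sum_distrib_right)
        moreover have "(\<Sum>j\<le>Suc m. b j * d j (Suc m)) = (\<Sum>j\<le>m. b j * d j (Suc m))"
          using dd[of "Suc m"] mK by simp
        ultimately show ?thesis by (simp only: sumb)
      qed
      define X where "X = (\<Sum>j\<le>m. b j * \<Delta> j)"
      have X1: "(\<Sum>j\<le>Suc m. b j * \<Delta> j) = X + b (Suc m) * \<Delta> (Suc m)" by (simp add: X_def)
      have bS: "b (Suc m) = v (Suc m) - v m" by (simp add: b_def)
      have e1: "S m = \<gamma> m + S (Suc m)" using Srec[of m] mK by simp
      have e2: "S (Suc m) = \<gamma> (Suc m) + S (Suc (Suc m))" using Srec[of "Suc m"] mK by simp
      have e3: "v m * S m = 1" using vS[of m] m1 mK by simp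
      have e4: "v (Suc m) * S (Suc m) = 1" using vS[of "Suc m"] mK by simp
      have ident: "\<gamma> m * v m * \<Delta> (Suc m) + S (Suc m) * X
           + \<gamma> (Suc m) * (v (Suc m) * \<Delta> (Suc (Suc m)) - (X + b (Suc m) * \<Delta> (Suc m)))
         = \<gamma> (Suc m) * v (Suc m) * \<Delta> (Suc (Suc m)) + S (Suc (Suc m)) * (X + b (Suc m) * \<Delta> (Suc m))"
        using e1 e2 e3 e4 unfolding bS by algebra
      have "c * (\<gamma> (Suc m) * v (Suc m) * \<Delta> (Suc (Suc m)) + S (Suc (Suc m)) * (X + b (Suc m) * \<Delta> (Suc m)))
          = c * (\<gamma> m * v m * \<Delta> (Suc m) + S (Suc m) * X)
           + c * \<gamma> (Suc m) * (v (Suc m) * \<Delta> (Suc (Suc m)) - (X + b (Suc m) * \<Delta> (Suc m)))"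
        using ident by (simp add: algebra_simps)
      also have "\<dots> \<le> v 0 * d 0 1 - (\<Sum>j\<le>Suc m. b j * d j (Suc (Suc m))) + (\<Sum>k=1..Suc m. v k * C k)"
        using IH W L R X1 unfolding X_def by simp
      finally show ?thesis using X1 unfolding X_def by simp
    qed
  qed
  note JK = J[OF K1 order_refl]
  have gK: "\<gamma> K * v K = 1" using vS[of K] Srec[of K] SK K1 by (simp add: mult.commute)
  have "(\<Sum>j\<le>K. b j * d j (Suc K)) \<ge> b 0 * d 0 (Suc K)"
  proof -
    have "(\<Sum>j\<le>K. b j * d j (Suc K)) = b 0 * d 0 (Suc K) + (\<Sum>j\<in>{1..K}. b j * d j (Suc K))"
      by (simp add: atMost_atLeast0 sum.atLeast_Suc_atMost)
    moreover have "(\<Sum>j\<in>{1..K}. b j * d j (Suc K)) \<ge> 0"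
      using bnn dnn by (intro sum_nonneg mult_nonneg_nonneg) auto
    ultimately show ?thesis by simp
  qed
  then have "c * \<Delta> (Suc K) \<le> v 0 * d 0 1 - v 0 * d 0 (Suc K) + (\<Sum>k=1..K. v k * C k)"
    using JK gK SK by (simp add: b_def)
  also have "\<dots> = (d 0 1 - d 0 (Suc K)) / (\<Sum>k=1..K. \<gamma> k) + (\<Sum>k=1..K. C k / (\<Sum>l=k..K. \<gamma> l))"
  proof -
    have "(\<Sum>k=1..K. v k * C k) = (\<Sum>k=1..K. C k / (\<Sum>l=k..K. \<gamma> l))"
      using v1 by (intro sum.cong) (auto simp: S_def)
    then show ?thesis using v0 by (simp add: S_def diff_divide_distrib right_diff_distrib)
  qed
  finally show ?thesis .
qed



lemma small_t:
  fixes A B :: real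
  assumes "B \<ge> 0" "\<And>t. 0 < t \<Longrightarrow> t < 1 \<Longrightarrow> 0 \<le> A + t * B"
  shows "0 \<le> A"
proof (rule ccontr)
  assume "\<not> 0 \<le> A"
  define t where "t = min (1/2) (- A / (2 * (B + 1)))"
  have p: "- A / (2 * (B + 1)) > 0" using \<open>\<not> 0 \<le> A\<close> assms(1) by (intro divide_pos_pos) auto
  have t0: "0 < t" "t < 1" using p by (auto simp: t_def)
  have "t * B \<le> (- A / (2 * (B + 1))) * B" using assms(1) by (intro mult_right_mono) (auto simp: t_def)
  also have "\<dots> < - A" using \<open>\<not> 0 \<le> A\<close> assms(1) mult_nonpos_nonneg[of A B] by (simp add: field_simps)
  finally show False using assms(2)[OF t0] by linarith
qed

lemma norm_sq_expand:
  fixes a w :: "'a::real_inner"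
  shows "(norm (a + t *\<^sub>R w))\<^sup>2 = (norm a)\<^sup>2 + 2 * t * inner a w + t\<^sup>2 * (norm w)\<^sup>2"
  by (simp only: power2_norm_eq_inner) (simp add: inner_add_left inner_add_right power2_eq_square algebra_simps inner_commute)

lemma prox_subgrad:
  fixes \<psi> :: "'a::real_inner \<Rightarrow> real"
  assumes N: "N > 0" and eta: "\<eta> > 0" and cD: "convex D" and cf: "convex_on D \<psi>" and xp: "xp \<in> D"
    and opt: "\<And>y. y \<in> D \<Longrightarrow> N * \<psi> xp + (norm (xp - c))\<^sup>2 / (2 * \<eta>) \<le> N * \<psi> y + (norm (y - c))\<^sup>2 / (2 * \<eta>)"
  shows "is_subgrad D \<psi> xp ((1 / (N * \<eta>)) *\<^sub>R (c - xp))"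
  unfolding is_subgrad_def
proof (intro conjI ballI xp)
  fix y assume y: "y \<in> D"
  define a where "a = xp - c"
  define w where "w = y - xp"
  have key: "0 \<le> (N * (\<psi> y - \<psi> xp) + inner a w / \<eta>) + t * ((norm w)\<^sup>2 / (2 * \<eta>))"
    if t: "0 < t" "t < 1" for t
  proof -
    define z where "z = (1 - t) *\<^sub>R xp + t *\<^sub>R y"
    have zD: "z \<in> D" using cD xp y t unfolding z_def by (intro convexD) auto
    have zeq: "z - c = a + t *\<^sub>R w" by (simp add: z_def a_def w_def algebra_simps)
    have cz: "\<psi> z \<le> (1 - t) * \<psi> xp + t * \<psi> y"
      unfolding z_def using t xp y by (intro convex_onD[OF cf]) auto
    have "N * \<psi> xp + (norm a)\<^sup>2 / (2 * \<eta>) \<le> N * \<psi> z + (norm (a + t *\<^sub>R w))\<^sup>2 / (2 * \<eta>)"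
      using opt[OF zD] zeq by (simp add: a_def)
    also have "\<dots> \<le> N * ((1 - t) * \<psi> xp + t * \<psi> y) + ((norm a)\<^sup>2 + 2 * t * inner a w + t\<^sup>2 * (norm w)\<^sup>2) / (2 * \<eta>)"
      using cz N by (simp add: norm_sq_expand)
    finally have ineq: "N * \<psi> xp + (norm a)\<^sup>2 / (2 * \<eta>) \<le> N * ((1 - t) * \<psi> xp + t * \<psi> y) + ((norm a)\<^sup>2 + 2 * t * inner a w + t\<^sup>2 * (norm w)\<^sup>2) / (2 * \<eta>)" .
    have ideq: "N * ((1 - t) * \<psi> xp + t * \<psi> y) + ((norm a)\<^sup>2 + 2 * t * inner a w + t\<^sup>2 * (norm w)\<^sup>2) / (2 * \<eta>)
       - (N * \<psi> xp + (norm a)\<^sup>2 / (2 * \<eta>)) = t * (N * (\<psi> y - \<psi> xp)) + t * (inner a w / \<eta>) + t * (t * ((norm w)\<^sup>2 / (2 * \<eta>)))"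
      using eta by (simp add: field_simps power2_eq_square)
    have "0 \<le> t * (N * (\<psi> y - \<psi> xp)) + t * (inner a w / \<eta>) + t * (t * ((norm w)\<^sup>2 / (2 * \<eta>)))"
      using ineq ideq by linarith
    then have "0 \<le> t * ((N * (\<psi> y - \<psi> xp) + inner a w / \<eta>) + t * ((norm w)\<^sup>2 / (2 * \<eta>)))"
      by (simp add: algebra_simps)
    then show ?thesis using t by (simp add: zero_le_mult_iff)
  qed
  have "0 \<le> N * (\<psi> y - \<psi> xp) + inner a w / \<eta>"
    by (rule small_t[OF _ key]) (use eta in auto)
  moreover have "(\<psi> y - \<psi> xp) + inner a w / (N * \<eta>) = (N * (\<psi> y - \<psi> xp) + inner a w / \<eta>) / N"
    using N eta by (simp add: field_simps)
  ultimately have "0 \<le> (\<psi> y - \<psi> xp) + inner a w / (N * \<eta>)"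
    using N by simp
  then show "\<psi> xp + inner ((1 / (N * \<eta>)) *\<^sub>R (c - xp)) (y - xp) \<le> \<psi> y"
    by (simp add: a_def w_def inner_diff_left diff_divide_distrib)
qed

lemma sq_sum_le:
  fixes a :: "nat \<Rightarrow> real"
  shows "2 * (\<Sum>i=1..m. a i * (\<Sum>j=1..<i. a j)) \<le> (\<Sum>i=1..m. a i)\<^sup>2"
proof (induction m)
  case 0 then show ?case by simp
next
  case (Suc m)
  have "2 * (\<Sum>i=1..Suc m. a i * (\<Sum>j=1..<i. a j)) = 2 * (\<Sum>i=1..m. a i * (\<Sum>j=1..<i. a j)) + 2 * a (Suc m) * (\<Sum>j=1..m. a j)"
    by (simp add: atLeastLessThanSuc_atLeastAtMost)
  also have "\<dots> \<le> (\<Sum>i=1..m. a i)\<^sup>2 + 2 * a (Suc m) * (\<Sum>j=1..m. a j) + (a (Suc m))\<^sup>2"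
    using Suc.IH zero_le_power2[of "a (Suc m)"] by linarith
  also have "\<dots> = (\<Sum>i=1..Suc m. a i)\<^sup>2" by (simp add: power2_eq_square algebra_simps)
  finally show ?case .
qed



lemma epoch:
  fixes n :: nat and fs :: "nat \<Rightarrow> 'a::euclidean_space \<Rightarrow> real" and g :: "nat \<Rightarrow> 'a \<Rightarrow> 'a"
    and G :: "nat \<Rightarrow> real" and \<psi> :: "'a \<Rightarrow> real" and D :: "'a set" and \<mu> \<eta> :: real
    and \<sigma> :: "nat \<Rightarrow> nat" and xi :: "nat \<Rightarrow> 'a" and x0 xp y :: 'a
  assumes n_pos: "n \<ge> 1"
    and g_subgrad: "\<And>i y. i \<in> {1..n} \<Longrightarrow> is_subgrad UNIV (fs i) y (g i y)"
    and lipschitz: "\<And>i y v. i \<in> {1..n} \<Longrightarrow> is_subgrad UNIV (fs i) y v \<Longrightarrow> norm v \<le> G i"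
    and psi_pcc: "proper_closed_convex D \<psi>"
    and psi_mu: "mu_condition D \<psi> \<mu>"
    and eta: "\<eta> > 0"
    and perm: "\<sigma> permutes {1..n}"
    and start: "xi 1 = x0"
    and step: "\<And>i. i \<in> {1..n} \<Longrightarrow> xi (Suc i) = xi i - \<eta> *\<^sub>R g (\<sigma> i) (xi i)"
    and prox: "xp \<in> D \<and> (\<forall>y\<in>D. real n * \<psi> xp + (norm (xp - xi (Suc n)))\<^sup>2 / (2 * \<eta>)
                 \<le> real n * \<psi> y + (norm (y - xi (Suc n)))\<^sup>2 / (2 * \<eta>))"
    and y: "y \<in> D"
  shows "2 * real n * \<eta> * (((1 / real n) * (\<Sum>i=1..n. fs i xp) + \<psi> xp) - ((1 / real n) * (\<Sum>i=1..n. fs i y) + \<psi> y))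
     \<le> (norm (y - x0))\<^sup>2 - (1 + real n * \<eta> * \<mu>) * (norm (y - xp))\<^sup>2 + 6 * \<eta>\<^sup>2 * (\<Sum>i=1..n. G i)\<^sup>2"
proof -
  define c where "c = xi (Suc n)"
  define gi where "gi i = g (\<sigma> i) (xi i)" for i
  define Gs where "Gs = (\<Sum>i=1..n. G i)"
  define dd where "dd = norm (xp - x0)"
  have sig: "\<sigma> i \<in> {1..n}" if "i \<in> {1..n}" for i
    using permutes_in_image[OF perm, of i] that by blast
  have gib: "norm (gi i) \<le> G (\<sigma> i)" if "i \<in> {1..n}" for i
    unfolding gi_def using lipschitz[OF sig[OF that] g_subgrad[OF sig[OF that]]] .
  have Gnn: "G (\<sigma> i) \<ge> 0" if "i \<in> {1..n}" for i using gib[OF that] norm_ge_zero order_trans by blast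
  have iter: "xi i = x0 - \<eta> *\<^sub>R (\<Sum>j=1..<i. gi j)" if "1 \<le> i" "i \<le> Suc n" for i
    using that
  proof (induction i)
    case 0 then show ?case by simp
  next
    case (Suc i)
    show ?case
    proof (cases "i = 0")
      case True then show ?thesis using start by simp
    next
      case False
      then have "xi (Suc i) = xi i - \<eta> *\<^sub>R gi i" using step[of i] Suc.prems by (simp add: gi_def)
      then show ?thesis using Suc False by (simp add: algebra_simps scaleR_right_distrib)
    qed
  qed
  have dist_i: "norm (xi i - x0) \<le> \<eta> * (\<Sum>j=1..<i. G (\<sigma> j))" if "1 \<le> i" "i \<le> Suc n" for i
  proof -
    have "norm (xi i - x0) = \<eta> * norm (\<Sum>j=1..<i. gi j)" using iter[OF that] eta by simp
    also have "\<dots> \<le> \<eta> * (\<Sum>j=1..<i. G (\<sigma> j))"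
      using eta that by (intro mult_left_mono order_trans[OF norm_sum sum_mono] gib) auto
    finally show ?thesis .
  qed
  have xpD: "xp \<in> D" using prox by simp
  have sumg: "(\<Sum>j=1..n. gi j) = (1 / \<eta>) *\<^sub>R (x0 - c)"
    using iter[of "Suc n"] eta unfolding c_def by (simp add: atLeastLessThanSuc_atLeastAtMost)
  have pcc: "convex D" "convex_on D \<psi>" using psi_pcc by (auto simp: proper_closed_convex_def)
  have sg: "is_subgrad D \<psi> xp ((1 / (real n * \<eta>)) *\<^sub>R (c - xp))"
    using n_pos eta pcc xpD prox unfolding c_def by (intro prox_subgrad) auto
  have mu0: "\<mu> \<ge> 0" using psi_mu by (simp add: mu_condition_def)
  have Fpsi: "\<psi> y - \<psi> xp - inner ((1 / (real n * \<eta>)) *\<^sub>R (c - xp)) (y - xp) \<ge> \<mu> / 2 * (norm (y - xp))\<^sup>2"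
    using psi_mu y sg unfolding mu_condition_def bregman_def by blast
  have F2: "real n * \<eta> * (\<psi> y - \<psi> xp) \<ge> inner (c - xp) (y - xp) + real n * \<eta> * \<mu> / 2 * (norm (y - xp))\<^sup>2"
  proof -
    have "real n * \<eta> * (\<psi> y - \<psi> xp - inner ((1 / (real n * \<eta>)) *\<^sub>R (c - xp)) (y - xp))
        \<ge> real n * \<eta> * (\<mu> / 2 * (norm (y - xp))\<^sup>2)"
      using Fpsi n_pos eta by (intro mult_left_mono) auto
    moreover have "real n * \<eta> * inner ((1 / (real n * \<eta>)) *\<^sub>R (c - xp)) (y - xp) = inner (c - xp) (y - xp)"
      using n_pos eta by simp
    ultimately show ?thesis by (simp add: algebra_simps)
  qed
  have per_i: "fs (\<sigma> i) y - fs (\<sigma> i) xp \<ge> inner (gi i) (y - xp) - 2 * G (\<sigma> i) * (dd + \<eta> * (\<Sum>j=1..<i. G (\<sigma> j)))"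
    if i: "i \<in> {1..n}" for i
  proof -
    let ?s = "\<sigma> i"
    have s: "?s \<in> {1..n}" using sig[OF i] .
    have a: "fs ?s y \<ge> fs ?s (xi i) + inner (gi i) (y - xi i)"
      using g_subgrad[OF s, of "xi i"] unfolding is_subgrad_def gi_def by auto
    have b: "fs ?s (xi i) \<ge> fs ?s xp + inner (g ?s xp) (xi i - xp)"
      using g_subgrad[OF s, of xp] unfolding is_subgrad_def by auto
    have e: "inner (gi i) (y - xi i) + inner (g ?s xp) (xi i - xp)
        = inner (gi i) (y - xp) + inner (gi i - g ?s xp) (xp - xi i)"
      by (simp add: inner_diff_left inner_diff_right algebra_simps)
    have nb: "norm (gi i - g ?s xp) \<le> 2 * G ?s"
      using norm_triangle_ineq4[of "gi i" "g ?s xp"] gib[OF i] lipschitz[OF s g_subgrad[OF s, of xp]] by linarith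
    have nx: "norm (xp - xi i) \<le> dd + \<eta> * (\<Sum>j=1..<i. G (\<sigma> j))"
    proof -
      have "norm (xp - xi i) \<le> norm (xp - x0) + norm (xi i - x0)"
        using norm_triangle_ineq4[of "xp - x0" "xi i - x0"] by simp
      then show ?thesis using dist_i[of i] i unfolding dd_def by auto
    qed
    have "\<bar>inner (gi i - g ?s xp) (xp - xi i)\<bar> \<le> norm (gi i - g ?s xp) * norm (xp - xi i)"
      by (rule Cauchy_Schwarz_ineq2)
    also have "\<dots> \<le> 2 * G ?s * (dd + \<eta> * (\<Sum>j=1..<i. G (\<sigma> j)))"
      using nb nx Gnn[OF i] by (intro mult_mono) auto
    finally show ?thesis using a b e by linarith
  qed
  have sumF: "(\<Sum>i=1..n. fs (\<sigma> i) y - fs (\<sigma> i) xp) \<ge> (\<Sum>i=1..n. inner (gi i) (y - xp) - 2 * G (\<sigma> i) * (dd + \<eta> * (\<Sum>j=1..<i. G (\<sigma> j))))"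
    using per_i by (intro sum_mono) auto
  have reidx: "(\<Sum>i=1..n. h (\<sigma> i)) = (\<Sum>i=1..n. h i)" for h :: "nat \<Rightarrow> real"
    using sum.permute[OF perm, of h] by simp
  have sGs: "(\<Sum>i=1..n. G (\<sigma> i)) = Gs" unfolding Gs_def by (rule reidx)
  have cross: "2 * (\<Sum>i=1..n. G (\<sigma> i) * (\<Sum>j=1..<i. G (\<sigma> j))) \<le> Gs\<^sup>2"
    using sq_sum_le[of "\<lambda>i. G (\<sigma> i)" n] sGs by simp
  have rhs: "(\<Sum>i=1..n. inner (gi i) (y - xp) - 2 * G (\<sigma> i) * (dd + \<eta> * (\<Sum>j=1..<i. G (\<sigma> j))))
      = inner (\<Sum>i=1..n. gi i) (y - xp) - 2 * dd * Gs - \<eta> * (2 * (\<Sum>i=1..n. G (\<sigma> i) * (\<Sum>j=1..<i. G (\<sigma> j))))"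
    by (simp add: sum_subtractf sum.distrib inner_sum_left sum_distrib_left sum_distrib_right algebra_simps sGs[symmetric])
  have lhs: "(\<Sum>i=1..n. fs (\<sigma> i) y - fs (\<sigma> i) xp) = (\<Sum>i=1..n. fs i y) - (\<Sum>i=1..n. fs i xp)"
  proof -
    have "(\<Sum>i=1..n. fs (\<sigma> i) y) = (\<Sum>i=1..n. fs i y)" using reidx[of "\<lambda>i. fs i y"] by simp
    moreover have "(\<Sum>i=1..n. fs (\<sigma> i) xp) = (\<Sum>i=1..n. fs i xp)" using reidx[of "\<lambda>i. fs i xp"] by simp
    ultimately show ?thesis by (simp add: sum_subtractf)
  qed
  have F1: "\<eta> * ((\<Sum>i=1..n. fs i y) - (\<Sum>i=1..n. fs i xp)) \<ge> inner (x0 - c) (y - xp) - 2 * \<eta> * dd * Gs - \<eta>\<^sup>2 * Gs\<^sup>2"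
  proof -
    have "(\<Sum>i=1..n. fs i y) - (\<Sum>i=1..n. fs i xp) \<ge> inner (\<Sum>i=1..n. gi i) (y - xp) - 2 * dd * Gs - \<eta> * Gs\<^sup>2"
      using sumF rhs lhs cross eta by (smt (verit) mult_left_mono)
    then have "\<eta> * ((\<Sum>i=1..n. fs i y) - (\<Sum>i=1..n. fs i xp)) \<ge> \<eta> * (inner (\<Sum>i=1..n. gi i) (y - xp) - 2 * dd * Gs - \<eta> * Gs\<^sup>2)"
      using eta by (intro mult_left_mono) auto
    moreover have "\<eta> * inner (\<Sum>i=1..n. gi i) (y - xp) = inner (x0 - c) (y - xp)"
      unfolding sumg using eta by simp
    ultimately show ?thesis by (simp add: algebra_simps power2_eq_square)
  qed
  have F3: "2 * inner (x0 - xp) (y - xp) = dd\<^sup>2 + (norm (y - xp))\<^sup>2 - (norm (y - x0))\<^sup>2"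
  proof -
    have "y - x0 = (y - xp) - (x0 - xp)" by simp
    then have "(norm (y - x0))\<^sup>2 = (norm (y - xp))\<^sup>2 - 2 * inner (x0 - xp) (y - xp) + (norm (x0 - xp))\<^sup>2"
      by (simp only: power2_norm_eq_inner) (simp add: inner_diff_left inner_diff_right inner_commute)
    moreover have "norm (x0 - xp) = dd" unfolding dd_def by (rule norm_minus_commute)
    ultimately show ?thesis by simp
  qed
  have F4: "dd\<^sup>2 - 4 * \<eta> * dd * Gs + 4 * \<eta>\<^sup>2 * Gs\<^sup>2 \<ge> 0"
  proof -
    have "dd\<^sup>2 - 4 * \<eta> * dd * Gs + 4 * \<eta>\<^sup>2 * Gs\<^sup>2 = (dd - 2 * \<eta> * Gs)\<^sup>2" by (simp add: power2_eq_square algebra_simps)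
    then show ?thesis by simp
  qed
  have ip: "inner (x0 - c) (y - xp) + inner (c - xp) (y - xp) = inner (x0 - xp) (y - xp)"
    by (simp add: inner_diff_left)
  have goal_eq: "2 * real n * \<eta> * (((1 / real n) * (\<Sum>i=1..n. fs i xp) + \<psi> xp) - ((1 / real n) * (\<Sum>i=1..n. fs i y) + \<psi> y))
     = - 2 * (\<eta> * ((\<Sum>i=1..n. fs i y) - (\<Sum>i=1..n. fs i xp))) - 2 * (real n * \<eta> * (\<psi> y - \<psi> xp))"
    using n_pos by (simp add: field_simps)
  have "(1 + real n * \<eta> * \<mu>) * (norm (y - xp))\<^sup>2 = (norm (y - xp))\<^sup>2 + 2 * (real n * \<eta> * \<mu> / 2 * (norm (y - xp))\<^sup>2)"
    by (simp add: algebra_simps)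
  then show ?thesis unfolding goal_eq Gs_def[symmetric] using F1 F2 F3 F4 ip by linarith
qed



theorem mainTheorem11:
  fixes n K :: nat
    and fs :: "nat \<Rightarrow> 'a::euclidean_space \<Rightarrow> real"
    and g :: "nat \<Rightarrow> 'a \<Rightarrow> 'a"
    and G :: "nat \<Rightarrow> real"
    and \<psi> :: "'a \<Rightarrow> real" and D :: "'a set" and \<mu> :: real
    and \<eta> :: "nat \<Rightarrow> real" and \<sigma> :: "nat \<Rightarrow> nat \<Rightarrow> nat"
    and x :: "nat \<Rightarrow> 'a" and xi :: "nat \<Rightarrow> nat \<Rightarrow> 'a" and xs :: 'a
  assumes n_pos: "n \<ge> 1"
    and K_ge: "K \<ge> 2"
    and f_convex: "\<And>i. i \<in> {1..n} \<Longrightarrow> convex_on UNIV (fs i)"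
    and g_subgrad: "\<And>i y. i \<in> {1..n} \<Longrightarrow> is_subgrad UNIV (fs i) y (g i y)"
    and G_pos: "\<And>i. i \<in> {1..n} \<Longrightarrow> G i > 0"
    and lipschitz: "\<And>i y v. i \<in> {1..n} \<Longrightarrow> is_subgrad UNIV (fs i) y v \<Longrightarrow> norm v \<le> G i"
    and psi_pcc: "proper_closed_convex D \<psi>"
    and psi_mu: "mu_condition D \<psi> \<mu>"
    and xs_min: "xs \<in> D"
      "\<And>y. y \<in> D \<Longrightarrow>
         (1 / real n) * (\<Sum>i=1..n. fs i xs) + \<psi> xs \<le> (1 / real n) * (\<Sum>i=1..n. fs i y) + \<psi> y"
    and x1: "x 1 \<in> D"
    and eta_pos: "\<And>k. k \<in> {1..K} \<Longrightarrow> \<eta> k > 0"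
    and perm: "\<And>k. k \<in> {1..K} \<Longrightarrow> \<sigma> k permutes {1..n}"
    and inner_start: "\<And>k. k \<in> {1..K} \<Longrightarrow> xi k 1 = x k"
    and inner_step: "\<And>k i. k \<in> {1..K} \<Longrightarrow> i \<in> {1..n} \<Longrightarrow>
         xi k (Suc i) = xi k i - \<eta> k *\<^sub>R g (\<sigma> k i) (xi k i)"
    and prox: "\<And>k. k \<in> {1..K} \<Longrightarrow> x (Suc k) \<in> D \<and>
         (\<forall>y\<in>D. real n * \<psi> (x (Suc k)) + (norm (x (Suc k) - xi k (Suc n)))\<^sup>2 / (2 * \<eta> k)
                 \<le> real n * \<psi> y + (norm (y - xi k (Suc n)))\<^sup>2 / (2 * \<eta> k))"
  shows "let F = (\<lambda>y. (1 / real n) * (\<Sum>i=1..n. fs i y) + \<psi> y);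
             \<gamma> = (\<lambda>k. \<eta> k * (\<Prod>l=2..k. 1 + real n * \<eta> (l - 1) * \<mu>));
             Gbar = (\<Sum>i=1..n. G i) / real n
         in F (x (Suc K)) - F xs \<le>
            ((norm (xs - x 1))\<^sup>2 - (norm (xs - x (Suc K)))\<^sup>2) / (2 * real n * (\<Sum>k=1..K. \<gamma> k))
            + 3 * Gbar\<^sup>2 * real n * (\<Sum>k=1..K. \<gamma> k * \<eta> k / (\<Sum>l=k..K. \<gamma> l))"
proof -
  define F where "F = (\<lambda>y. (1 / real n) * (\<Sum>i=1..n. fs i y) + \<psi> y)"
  define P where "P = (\<lambda>k. (\<Prod>l=2..k. 1 + real n * \<eta> (l - 1) * \<mu>))"
  define \<gamma> where "\<gamma> = (\<lambda>k. \<eta> k * P k)"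
  define Gs where "Gs = (\<Sum>i=1..n. G i)"
  define a where "a j = (if j = 0 then xs else x j)" for j
  define \<Delta> where "\<Delta> j = F (a j) - F xs" for j
  define d where "d j k = P k * (norm (a j - x k))\<^sup>2" for j k
  define C where "C k = 6 * Gs\<^sup>2 * \<gamma> k * \<eta> k" for k
  have mu0: "\<mu> \<ge> 0" using psi_mu by (simp add: mu_condition_def)
  have P1: "P k \<ge> 1" if "k \<le> Suc K" for k
    unfolding P_def
  proof (intro prod_ge_1)
    fix l assume l: "l \<in> {2..k}"
    then have "l - 1 \<in> {1..K}" using that by auto
    then have "\<eta> (l - 1) > 0" using eta_pos by blast
    then have "0 \<le> real n * \<eta> (l - 1) * \<mu>" using mu0 by simp
    then show "1 \<le> 1 + real n * \<eta> (l - 1) * \<mu>" by simp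
  qed
  have Psuc: "P (Suc k) = P k * (1 + real n * \<eta> k * \<mu>)" if "k \<ge> 1" for k
    unfolding P_def using that by (simp add: prod.nat_ivl_Suc')
  have P_1: "P (Suc 0) = 1" unfolding P_def by simp
  have xD: "x j \<in> D" if "1 \<le> j" "j \<le> Suc K" for j
  proof (cases "j = 1")
    case True then show ?thesis using x1 by simp
  next
    case False
    then have "j - 1 \<in> {1..K}" "Suc (j - 1) = j" using that by auto
    then show ?thesis using prox[of "j - 1"] by metis
  qed
  have aD: "a j \<in> D" if "j \<le> Suc K" for j
    using xD[of j] that xs_min(1) by (auto simp: a_def)
  have E: "2 * real n * \<gamma> k * (\<Delta> (Suc k) - \<Delta> j) \<le> d j k - d j (Suc k) + C k"
    if k: "k \<in> {1..K}" and j: "j \<le> k" for k j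
  proof -
    have ep: "2 * real n * \<eta> k * (F (x (Suc k)) - F (a j))
       \<le> (norm (a j - x k))\<^sup>2 - (1 + real n * \<eta> k * \<mu>) * (norm (a j - x (Suc k)))\<^sup>2 + 6 * (\<eta> k)\<^sup>2 * Gs\<^sup>2"
      unfolding F_def Gs_def
      by (rule epoch[OF n_pos g_subgrad lipschitz psi_pcc psi_mu eta_pos[OF k] perm[OF k] inner_start[OF k]
            inner_step[OF k] prox[OF k] aD]) (use j k in auto)
    have "P k * (2 * real n * \<eta> k * (F (x (Suc k)) - F (a j)))
       \<le> P k * ((norm (a j - x k))\<^sup>2 - (1 + real n * \<eta> k * \<mu>) * (norm (a j - x (Suc k)))\<^sup>2 + 6 * (\<eta> k)\<^sup>2 * Gs\<^sup>2)"
      using ep P1[of k] k by (intro mult_left_mono) auto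
    then show ?thesis
      using Psuc[of k] k by (simp add: d_def C_def \<gamma>_def \<Delta>_def a_def algebra_simps power2_eq_square)
  qed
  have gpos: "\<gamma> k > 0" if "k \<in> {1..K}" for k
    using eta_pos[OF that] P1[of k] that unfolding \<gamma>_def by auto
  have comb: "2 * real n * \<Delta> (Suc K) \<le> (d 0 1 - d 0 (Suc K)) / (\<Sum>k=1..K. \<gamma> k) + (\<Sum>k=1..K. C k / (\<Sum>l=k..K. \<gamma> l))"
  proof (rule combine)
    show "1 \<le> K" using K_ge by simp
    show "\<And>k. k \<in> {1..K} \<Longrightarrow> 0 < \<gamma> k" by (rule gpos)
    show "\<And>k j. k \<in> {1..K} \<Longrightarrow> j \<le> k \<Longrightarrow> 2 * real n * \<gamma> k * (\<Delta> (Suc k) - \<Delta> j) \<le> d j k - d j (Suc k) + C k"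
      using E by (simp add: mult.assoc)
    show "\<And>j. j \<in> {1..K} \<Longrightarrow> d j j = 0" by (auto simp: d_def a_def)
    show "\<And>j. j \<le> K \<Longrightarrow> 0 \<le> d j (Suc K)" using P1[of "Suc K"] by (auto simp: d_def)
    show "\<Delta> 0 = 0" by (simp add: \<Delta>_def a_def)
  qed
  have d01: "d 0 1 = (norm (xs - x 1))\<^sup>2" by (simp add: d_def a_def P_1)
  have d0K: "d 0 (Suc K) \<ge> (norm (xs - x (Suc K)))\<^sup>2"
    using P1[of "Suc K"] unfolding d_def a_def by (simp add: mult_le_cancel_right1)
  have Spos: "(\<Sum>k=1..K. \<gamma> k) > 0" using gpos K_ge by (intro sum_pos) auto
  have n0: "real n > 0" using n_pos by simp
  have main: "F (x (Suc K)) - F xs \<le>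
            ((norm (xs - x 1))\<^sup>2 - (norm (xs - x (Suc K)))\<^sup>2) / (2 * real n * (\<Sum>k=1..K. \<gamma> k))
            + 3 * (Gs / real n)\<^sup>2 * real n * (\<Sum>k=1..K. \<gamma> k * \<eta> k / (\<Sum>l=k..K. \<gamma> l))"
  proof -
    have "(d 0 1 - d 0 (Suc K)) / (\<Sum>k=1..K. \<gamma> k) \<le> ((norm (xs - x 1))\<^sup>2 - (norm (xs - x (Suc K)))\<^sup>2) / (\<Sum>k=1..K. \<gamma> k)"
      using d01 d0K Spos by (intro divide_right_mono) auto
    then have "2 * real n * \<Delta> (Suc K) \<le> ((norm (xs - x 1))\<^sup>2 - (norm (xs - x (Suc K)))\<^sup>2) / (\<Sum>k=1..K. \<gamma> k)
         + (\<Sum>k=1..K. C k / (\<Sum>l=k..K. \<gamma> l))" using comb by linarith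
    moreover have "(\<Sum>k=1..K. C k / (\<Sum>l=k..K. \<gamma> l)) = 6 * Gs\<^sup>2 * (\<Sum>k=1..K. \<gamma> k * \<eta> k / (\<Sum>l=k..K. \<gamma> l))"
      by (simp add: C_def sum_distrib_left mult.assoc)
    ultimately have "2 * real n * \<Delta> (Suc K) \<le> ((norm (xs - x 1))\<^sup>2 - (norm (xs - x (Suc K)))\<^sup>2) / (\<Sum>k=1..K. \<gamma> k)
         + 6 * Gs\<^sup>2 * (\<Sum>k=1..K. \<gamma> k * \<eta> k / (\<Sum>l=k..K. \<gamma> l))" by simp
    then have "\<Delta> (Suc K) \<le> (((norm (xs - x 1))\<^sup>2 - (norm (xs - x (Suc K)))\<^sup>2) / (\<Sum>k=1..K. \<gamma> k)
         + 6 * Gs\<^sup>2 * (\<Sum>k=1..K. \<gamma> k * \<eta> k / (\<Sum>l=k..K. \<gamma> l))) / (2 * real n)"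
      using n0 by (simp add: field_simps)
    also have "\<dots> = ((norm (xs - x 1))\<^sup>2 - (norm (xs - x (Suc K)))\<^sup>2) / (2 * real n * (\<Sum>k=1..K. \<gamma> k))
            + 3 * (Gs / real n)\<^sup>2 * real n * (\<Sum>k=1..K. \<gamma> k * \<eta> k / (\<Sum>l=k..K. \<gamma> l))"
      using n0 Spos by (simp add: field_simps power2_eq_square)
    finally show ?thesis by (simp add: \<Delta>_def a_def)
  qed
  show ?thesis using main unfolding Let_def F_def \<gamma>_def P_def Gs_def by simp
qed

end
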